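(* Let $G$ be a finite simple connected graph and let $S,S'\subseteq V(G)$ with $2\le |S|$ and $S\subset S'$. If $G$ contains $k$ completely independent $S'$-Steiner trees, then $G$ contains $k$ completely independent $S$-Steiner trees. In particular $\kappa^*_G(S)\geq \kappa^*_G(S')$.
   Context: For $S\subseteq V(G)$ with $|S|\ge 2$, an $S$-Steiner tree of $G$ is a subtree $T$ of $G$ with $S\subseteq V(T)$ all of whose leaves belong to $S$. A family of $S$-Steiner trees $T_1,\dots,T_k$ is completely independent if for all $1\le p<q\le k$: $E(T_p)\cap E(T_q)=\emptyset$, $V(T_p)\cap V(T_q)=S$, and for any two vertices $x_1,x_2\in S$ the $(x_1,x_2)$-paths in $T_p$ and in $T_q$ are internally disjoint. $\kappa^*_G(S)$ is the maximum number of $S$-Steiner trees in a completely independent family in $G$. *)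

theory Defs
  imports Main
begin

definition simple_graph :: "'a set \<Rightarrow> 'a set set \<Rightarrow> bool" where
  "simple_graph V E \<longleftrightarrow> (\<forall>e\<in>E. \<exists>u v. e = {u, v} \<and> u \<noteq> v \<and> u \<in> V \<and> v \<in> V)"

definition finite_simple_graph :: "'a set \<Rightarrow> 'a set set \<Rightarrow> bool" where
  "finite_simple_graph V E \<longleftrightarrow> finite V \<and> simple_graph V E"

definition is_path :: "'a set \<Rightarrow> 'a set set \<Rightarrow> 'a list \<Rightarrow> bool" where
  "is_path V E P \<longleftrightarrow> P \<noteq> [] \<and> distinct P \<and> set P \<subseteq> V \<and>
     (\<forall>i. Suc i < length P \<longrightarrow> {P ! i, P ! Suc i} \<in> E)"

definition path_between :: "'a set \<Rightarrow> 'a set set \<Rightarrow> 'a \<Rightarrow> 'a \<Rightarrow> 'a list \<Rightarrow> bool" where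
  "path_between V E x y P \<longleftrightarrow> is_path V E P \<and> hd P = x \<and> last P = y"

definition connected_graph :: "'a set \<Rightarrow> 'a set set \<Rightarrow> bool" where
  "connected_graph V E \<longleftrightarrow> V \<noteq> {} \<and> (\<forall>x\<in>V. \<forall>y\<in>V. \<exists>P. path_between V E x y P)"

definition is_cycle :: "'a set \<Rightarrow> 'a set set \<Rightarrow> 'a list \<Rightarrow> bool" where
  "is_cycle V E C \<longleftrightarrow> is_path V E C \<and> length C \<ge> 3 \<and> {last C, hd C} \<in> E"

definition is_tree :: "'a set \<Rightarrow> 'a set set \<Rightarrow> bool" where
  "is_tree V E \<longleftrightarrow> simple_graph V E \<and> connected_graph V E \<and> (\<nexists>C. is_cycle V E C)"

definition subgraph :: "'a set \<Rightarrow> 'a set set \<Rightarrow> 'a set \<Rightarrow> 'a set set \<Rightarrow> bool" where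
  "subgraph VT ET V E \<longleftrightarrow> VT \<subseteq> V \<and> ET \<subseteq> E \<and> (\<forall>e\<in>ET. e \<subseteq> VT)"

definition degree :: "'a set set \<Rightarrow> 'a \<Rightarrow> nat" where
  "degree E v = card {e\<in>E. v \<in> e}"

definition leaves :: "'a set \<Rightarrow> 'a set set \<Rightarrow> 'a set" where
  "leaves V E = {v\<in>V. degree E v = 1}"

definition steiner_tree :: "'a set \<Rightarrow> 'a set set \<Rightarrow> 'a set \<Rightarrow> 'a set \<times> 'a set set \<Rightarrow> bool" where
  "steiner_tree V E S T \<longleftrightarrow> subgraph (fst T) (snd T) V E \<and> is_tree (fst T) (snd T) \<and>
     S \<subseteq> fst T \<and> leaves (fst T) (snd T) \<subseteq> S"

definition internal :: "'a list \<Rightarrow> 'a set" where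
  "internal P = set (butlast (tl P))"

definition completely_independent ::
  "'a set \<Rightarrow> 'a set set \<Rightarrow> 'a set \<Rightarrow> nat \<Rightarrow> (nat \<Rightarrow> 'a set \<times> 'a set set) \<Rightarrow> bool" where
  "completely_independent V E S k T \<longleftrightarrow>
     (\<forall>i<k. steiner_tree V E S (T i)) \<and>
     (\<forall>p q. p < q \<and> q < k \<longrightarrow>
        snd (T p) \<inter> snd (T q) = {} \<and>
        fst (T p) \<inter> fst (T q) = S \<and>
        (\<forall>x1\<in>S. \<forall>x2\<in>S. \<forall>P Q.
            path_between (fst (T p)) (snd (T p)) x1 x2 P \<and>
            path_between (fst (T q)) (snd (T q)) x1 x2 Q \<longrightarrow>
            internal P \<inter> internal Q = {}))"

definition has_cist :: "'a set \<Rightarrow> 'a set set \<Rightarrow> 'a set \<Rightarrow> nat \<Rightarrow> bool" where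
  "has_cist V E S k \<longleftrightarrow> (\<exists>T. completely_independent V E S k T)"

definition kappa_star :: "'a set \<Rightarrow> 'a set set \<Rightarrow> 'a set \<Rightarrow> nat" where
  "kappa_star V E S = Max {k. has_cist V E S k}"

end

theory Submission
  imports Defs
begin

fun pedges :: "'a list \<Rightarrow> 'a set set" where
  "pedges (x # y # xs) = insert {x, y} (pedges (y # xs))"
| "pedges _ = {}"

lemma pedges_nth: "(\<forall>i. Suc i < length P \<longrightarrow> {P ! i, P ! Suc i} \<in> E) \<longleftrightarrow> pedges P \<subseteq> E"
proof (induction P rule: pedges.induct)
  case (1 x y xs)
  have "(\<forall>i. Suc i < length (x # y # xs) \<longrightarrow> {(x # y # xs) ! i, (x # y # xs) ! Suc i} \<in> E)
     \<longleftrightarrow> {x,y} \<in> E \<and> (\<forall>i. Suc i < length (y # xs) \<longrightarrow> {(y # xs) ! i, (y # xs) ! Suc i} \<in> E)"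
    (is "?L \<longleftrightarrow> ?R")
  proof
    assume ?L then show ?R by (metis Suc_less_eq length_Cons nth_Cons_0 nth_Cons_Suc zero_less_Suc)
  next
    assume ?R then show ?L
      by (metis One_nat_def Suc_less_eq length_Cons less_Suc_eq_0_disj nth_Cons_0 nth_Cons_Suc)
  qed
  then show ?case using 1 by simp
qed auto

lemma is_path_alt: "is_path V E P \<longleftrightarrow> P \<noteq> [] \<and> distinct P \<and> set P \<subseteq> V \<and> pedges P \<subseteq> E"
  unfolding is_path_def using pedges_nth by blast

lemma pedges_Cons: "R \<noteq> [] \<Longrightarrow> pedges (x # R) = insert {x, hd R} (pedges R)"
  by (cases R) auto

lemma pedges_append: "pedges (xs @ y # ys) = pedges (xs @ [y]) \<union> pedges (y # ys)"
proof (induction xs)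
  case (Cons a xs)
  then show ?case by (cases xs) auto
qed auto

lemma pedges_rev: "pedges (rev xs) = pedges xs"
proof (induction xs rule: pedges.induct)
  case (1 x y xs)
  have "pedges (rev (x # y # xs)) = pedges (rev xs @ y # [x])" by simp
  also have "\<dots> = pedges (rev xs @ [y]) \<union> pedges [y, x]" by (rule pedges_append)
  also have "\<dots> = pedges (rev (y # xs)) \<union> pedges [y, x]" by simp
  finally show ?case using 1 by (auto simp: insert_commute)
qed auto

lemma pedges_subset_set: "e \<in> pedges P \<Longrightarrow> e \<subseteq> set P"
  by (induction P rule: pedges.induct) auto

lemma pedges_snoc_sub: "pedges xs \<subseteq> pedges (xs @ [y])"
  by (induction xs rule: pedges.induct) auto

lemma pedges_append_sub1: "pedges xs \<subseteq> pedges (xs @ ys)"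
proof (cases ys)
  case (Cons y ys')
  have "pedges (xs @ ys) = pedges (xs @ [y]) \<union> pedges (y # ys')"
    unfolding Cons by (rule pedges_append)
  then show ?thesis using pedges_snoc_sub[of xs y] by blast
qed auto

lemma pedges_append_sub2: "pedges ys \<subseteq> pedges (xs @ ys)"
proof (cases ys)
  case (Cons y ys')
  then show ?thesis using pedges_append[of xs y ys'] by auto
qed auto

lemma walk_to_path:
  "xs \<noteq> [] \<Longrightarrow> \<exists>R. R \<noteq> [] \<and> distinct R \<and> hd R = hd xs \<and> last R = last xs \<and> set R \<subseteq> set xs
     \<and> pedges R \<subseteq> pedges xs"
proof (induction xs)
  case Nil then show ?case by simp
next
  case (Cons x xs)
  show ?case
  proof (cases "xs = []")
    case True then show ?thesis by (intro exI[of _ "[x]"]) auto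
  next
    case False
    then obtain R' where R': "R' \<noteq> []" "distinct R'" "hd R' = hd xs" "last R' = last xs" "set R' \<subseteq> set xs"
      "pedges R' \<subseteq> pedges xs" using Cons.IH by blast
    have pxs: "pedges (x # xs) = insert {x, hd xs} (pedges xs)" using pedges_Cons[OF False] .
    show ?thesis
    proof (cases "x \<in> set R'")
      case True
      then obtain us vs where uv: "R' = us @ x # vs" by (meson split_list)
      have "pedges (x # vs) \<subseteq> pedges R'" using uv pedges_append_sub2 by metis
      moreover have "distinct (x # vs)" using R'(2) uv by auto
      moreover have "last (x # vs) = last (x # xs)" using R'(4) uv False by simp
      moreover have "set (x # vs) \<subseteq> set (x # xs)" using R'(5) uv by auto
      ultimately show ?thesis using R' pxs by (intro exI[of _ "x # vs"]) auto
    next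
      case False
      have "pedges (x # R') = insert {x, hd xs} (pedges R')" using pedges_Cons R' by metis
      then show ?thesis using False R' pxs \<open>xs \<noteq> []\<close> by (intro exI[of _ "x # R'"]) auto
    qed
  qed
qed

lemma pedges_join: "W1 \<noteq> [] \<Longrightarrow> W2 \<noteq> [] \<Longrightarrow> last W1 = hd W2 \<Longrightarrow>
   pedges (W1 @ tl W2) = pedges W1 \<union> pedges W2"
proof -
  assume a: "W1 \<noteq> []" "W2 \<noteq> []" "last W1 = hd W2"
  have w1: "W1 = butlast W1 @ [last W1]" using a(1) by simp
  have "W1 @ tl W2 = butlast W1 @ last W1 # tl W2" by (subst w1) simp
  moreover have "butlast W1 @ [last W1] = W1" using a(1) by simp
  moreover have "last W1 # tl W2 = W2" using a by simp
  ultimately show ?thesis using pedges_append by metis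
qed


lemma path_between_alt: "path_between V E x y P \<longleftrightarrow>
  P \<noteq> [] \<and> distinct P \<and> set P \<subseteq> V \<and> pedges P \<subseteq> E \<and> hd P = x \<and> last P = y"
  unfolding path_between_def is_path_alt by blast

lemma path_between_rev: "path_between V E x y P \<Longrightarrow> path_between V E y x (rev P)"
  unfolding path_between_alt by (auto simp: pedges_rev hd_rev last_rev)

definition reach :: "'a set set \<Rightarrow> 'a set \<Rightarrow> 'a \<Rightarrow> 'a \<Rightarrow> bool" where
  "reach F U x y \<longleftrightarrow> (\<exists>W. W \<noteq> [] \<and> hd W = x \<and> last W = y \<and> set W \<subseteq> U \<and> pedges W \<subseteq> F)"

lemma reach_sym: "reach F U x y \<Longrightarrow> reach F U y x"
  unfolding reach_def
  by (metis hd_rev last_rev pedges_rev rev_is_Nil_conv set_rev)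

lemma reach_trans: "reach F U x y \<Longrightarrow> reach F U y z \<Longrightarrow> reach F U x z"
proof -
  assume "reach F U x y" "reach F U y z"
  then obtain W1 W2 where w: "W1 \<noteq> []" "hd W1 = x" "last W1 = y" "set W1 \<subseteq> U" "pedges W1 \<subseteq> F"
    "W2 \<noteq> []" "hd W2 = y" "last W2 = z" "set W2 \<subseteq> U" "pedges W2 \<subseteq> F"
    unfolding reach_def by blast
  have l: "last W1 = hd W2" using w(3) w(7) by simp
  have eq: "pedges (W1 @ tl W2) = pedges W1 \<union> pedges W2" using pedges_join[OF w(1) w(6) l] .
  have a1: "pedges (W1 @ tl W2) \<subseteq> F" unfolding eq using w(5) w(10) by blast
  have "set (tl W2) \<subseteq> set W2" by (cases W2) auto
  then have a2: "set (W1 @ tl W2) \<subseteq> U" using w(4) w(9) by auto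
  have a3: "hd (W1 @ tl W2) = x" using w(1) w(2) by simp
  have "last W2 = last (hd W2 # tl W2)" using w(6) by simp
  then have a4: "last (W1 @ tl W2) = z" using w(1) w(3) w(8) l
    by (cases "tl W2 = []") auto
  have a5: "W1 @ tl W2 \<noteq> []" using w(1) by simp
  show ?thesis unfolding reach_def using a1 a2 a3 a4 a5 by blast
qed

lemma reach_path: "reach F U x y \<Longrightarrow> \<exists>R. path_between U F x y R"
proof -
  assume "reach F U x y"
  then obtain W where W: "W \<noteq> []" "hd W = x" "last W = y" "set W \<subseteq> U" "pedges W \<subseteq> F"
    unfolding reach_def by blast
  obtain R where R: "R \<noteq> []" "distinct R" "hd R = hd W" "last R = last W" "set R \<subseteq> set W"
     "pedges R \<subseteq> pedges W" using walk_to_path[OF W(1)] by blast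
  have "path_between U F x y R" unfolding path_between_alt using R W by auto
  then show ?thesis by blast
qed

lemma path_reach: "path_between U F x y R \<Longrightarrow> reach F U x y"
  unfolding reach_def path_between_alt by blast

lemma len2: "R \<noteq> [] \<Longrightarrow> hd R \<noteq> last R \<Longrightarrow> length R \<ge> 2"
  by (cases R; cases "tl R") auto

lemma tree_unique:
  assumes nc: "\<nexists>C. is_cycle V E C"
  shows "path_between V E x y P \<Longrightarrow> path_between V E x y Q \<Longrightarrow> P = Q"
proof (induction P arbitrary: x Q)
  case Nil then show ?case by (simp add: path_between_alt)
next
  case (Cons x' P')
  have P: "x' = x" "distinct (x' # P')" "set (x' # P') \<subseteq> V" "pedges (x' # P') \<subseteq> E" "last (x' # P') = y"
    using Cons.prems(1) unfolding path_between_alt by auto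
  obtain Q' where Qd: "Q = x # Q'" using Cons.prems(2) unfolding path_between_alt by (cases Q) auto
  have Q: "distinct (x # Q')" "set (x # Q') \<subseteq> V" "pedges (x # Q') \<subseteq> E" "last (x # Q') = y"
    using Cons.prems(2) Qd unfolding path_between_alt by auto
  show ?case
  proof (cases "P' = []")
    case True
    then have "y = x" using P by simp
    then have "Q' = []" using Q by (metis distinct.simps(2) last.simps last_in_set)
    then show ?thesis using True Qd P by simp
  next
    case PN: False
    show ?thesis
    proof (cases "Q' = []")
      case True
      then have "y = x" using Q by simp
      then show ?thesis using P PN by (metis distinct.simps(2) last.simps last_in_set)
    next
      case QN: False
      have pP: "pedges (x # P') = insert {x, hd P'} (pedges P')" using PN pedges_Cons by metis
      have pQ: "pedges (x # Q') = insert {x, hd Q'} (pedges Q')" using QN pedges_Cons by metis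
      show ?thesis
      proof (cases "hd P' = hd Q'")
        case True
        have "path_between V E (hd P') y P'" using P PN pP unfolding path_between_alt by auto
        moreover have "path_between V E (hd P') y Q'" using Q QN pQ True unfolding path_between_alt by auto
        ultimately have "P' = Q'" using Cons.IH by blast
        then show ?thesis using Qd P by simp
      next
        case False
        have "reach E (set P' \<union> set Q') (hd P') y" using P PN pP
          unfolding reach_def by (intro exI[of _ P']) auto
        moreover have "reach E (set P' \<union> set Q') (hd Q') y" using Q QN pQ
          unfolding reach_def by (intro exI[of _ Q']) auto
        ultimately have "reach E (set P' \<union> set Q') (hd P') (hd Q')" using reach_sym reach_trans by metis
        then obtain R where R: "path_between (set P' \<union> set Q') E (hd P') (hd Q') R"
          using reach_path by metis
        have xR: "x \<notin> set R" using R P Q unfolding path_between_alt by auto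
        have Rp: "R \<noteq> []" "distinct R" "pedges R \<subseteq> E" "hd R = hd P'" "last R = hd Q'" "set R \<subseteq> V"
          using R P Q unfolding path_between_alt by auto
        have "length R \<ge> 2" using len2 Rp False by metis
        moreover have "pedges (x # R) = insert {x, hd P'} (pedges R)" using pedges_Cons Rp by metis
        ultimately have "is_cycle V E (x # R)"
          unfolding is_cycle_def is_path_alt using Rp xR P pP pQ Q
          by (auto simp: insert_commute)
        then show ?thesis using nc by blast
      qed
    qed
  qed
qed


definition subV :: "'a set \<Rightarrow> 'a set set \<Rightarrow> 'a set \<Rightarrow> 'a set" where
  "subV VT ET S = {u. \<exists>a\<in>S. \<exists>b\<in>S. \<exists>P. path_between VT ET a b P \<and> u \<in> set P}"

definition subE :: "'a set \<Rightarrow> 'a set set \<Rightarrow> 'a set \<Rightarrow> 'a set set" where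
  "subE VT ET S = {e. \<exists>a\<in>S. \<exists>b\<in>S. \<exists>P. path_between VT ET a b P \<and> e \<in> pedges P}"

lemma cycle_mono: "is_cycle V1 E1 C \<Longrightarrow> V1 \<subseteq> V2 \<Longrightarrow> E1 \<subseteq> E2 \<Longrightarrow> is_cycle V2 E2 C"
  unfolding is_cycle_def is_path_alt by auto

lemma path_mono: "path_between V1 E1 x y C \<Longrightarrow> V1 \<subseteq> V2 \<Longrightarrow> E1 \<subseteq> E2 \<Longrightarrow> path_between V2 E2 x y C"
  unfolding path_between_alt by auto

lemma subV_sub: "subV VT ET S \<subseteq> VT"
  unfolding subV_def path_between_alt by auto

lemma subE_sub: "subE VT ET S \<subseteq> ET"
  unfolding subE_def path_between_alt by auto

lemma subE_in: "e \<in> subE VT ET S \<Longrightarrow> e \<subseteq> subV VT ET S"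
  unfolding subE_def subV_def using pedges_subset_set by blast

lemma S_subV: "S \<subseteq> VT \<Longrightarrow> S \<subseteq> subV VT ET S"
proof
  fix a assume "S \<subseteq> VT" "a \<in> S"
  then have "path_between VT ET a a [a]" by (auto simp: path_between_alt)
  then show "a \<in> subV VT ET S" unfolding subV_def using \<open>a \<in> S\<close> by fastforce
qed

lemma path_in_sub: "a \<in> S \<Longrightarrow> b \<in> S \<Longrightarrow> path_between VT ET a b P \<Longrightarrow>
   path_between (subV VT ET S) (subE VT ET S) a b P"
  unfolding path_between_alt subV_def subE_def by blast

lemma reach_to_S:
  assumes "u \<in> subV VT ET S"
  shows "\<exists>a\<in>S. reach (subE VT ET S) (subV VT ET S) u a"
proof -
  obtain a b P where abP: "a \<in> S" "b \<in> S" "path_between VT ET a b P" "u \<in> set P"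
    using assms unfolding subV_def by blast
  have Ps: "path_between (subV VT ET S) (subE VT ET S) a b P" using abP path_in_sub by metis
  obtain P1 P2 where Pd: "P = P1 @ u # P2" using abP(4) by (meson split_list)
  have "pedges (P1 @ [u]) \<subseteq> pedges P" using Pd pedges_append by (metis Un_upper1)
  moreover have "hd (P1 @ [u]) = a" using Ps Pd unfolding path_between_alt by (cases P1) auto
  ultimately have "reach (subE VT ET S) (subV VT ET S) a u" using Ps Pd
    unfolding reach_def path_between_alt by (intro exI[of _ "P1 @ [u]"]) auto
  then show ?thesis using abP(1) reach_sym by metis
qed

lemma sub_tree:
  assumes T: "is_tree VT ET" and S: "S \<subseteq> VT" "S \<noteq> {}" and fin: "finite ET"
  shows "is_tree (subV VT ET S) (subE VT ET S) \<and> leaves (subV VT ET S) (subE VT ET S) \<subseteq> S"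
proof -
  let ?V = "subV VT ET S" and ?E = "subE VT ET S"
  have simp: "simple_graph ?V ?E"
  proof -
    have "\<forall>e\<in>ET. \<exists>u v. e = {u, v} \<and> u \<noteq> v" using T unfolding is_tree_def simple_graph_def by blast
    then have h: "\<And>e. e \<in> ET \<Longrightarrow> \<exists>u v. e = {u, v} \<and> u \<noteq> v" by blast
    show ?thesis unfolding simple_graph_def
    proof
      fix e assume e: "e \<in> ?E"
      then obtain u v where uv: "e = {u, v}" "u \<noteq> v" using h subE_sub by blast
      moreover have "e \<subseteq> ?V" using subE_in e by metis
      ultimately show "\<exists>u v. e = {u, v} \<and> u \<noteq> v \<and> u \<in> ?V \<and> v \<in> ?V" by blast
    qed
  qed
  have conn: "connected_graph ?V ?E"
    unfolding connected_graph_def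
  proof (intro conjI ballI)
    show "?V \<noteq> {}" using S S_subV by blast
  next
    fix u w assume uw: "u \<in> ?V" "w \<in> ?V"
    obtain a where a: "a \<in> S" "reach ?E ?V u a" using reach_to_S uw(1) by metis
    obtain c where c: "c \<in> S" "reach ?E ?V w c" using reach_to_S uw(2) by metis
    obtain R where "path_between VT ET a c R" using T a c S unfolding is_tree_def connected_graph_def by blast
    then have "reach ?E ?V a c" using path_in_sub path_reach a c by metis
    then have "reach ?E ?V u w" using a c reach_sym reach_trans by metis
    then show "\<exists>P. path_between ?V ?E u w P" using reach_path by metis
  qed
  have nc: "\<nexists>C. is_cycle ?V ?E C" using T cycle_mono subV_sub subE_sub unfolding is_tree_def by metis
  have lv: "leaves ?V ?E \<subseteq> S"
  proof
    fix u assume u: "u \<in> leaves ?V ?E"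
    show "u \<in> S"
    proof (rule ccontr)
      assume uS: "u \<notin> S"
      obtain a b P where abP: "a \<in> S" "b \<in> S" "path_between VT ET a b P" "u \<in> set P"
        using u unfolding subV_def leaves_def by blast
      obtain P1 P2 where Pd: "P = P1 @ u # P2" using abP(4) by (meson split_list)
      have P1: "P1 \<noteq> []" using abP uS Pd unfolding path_between_alt by auto
      have P2: "P2 \<noteq> []" using abP uS Pd unfolding path_between_alt by auto
      have dist: "distinct P" using abP unfolding path_between_alt by auto
      have "P = butlast P1 @ last P1 # u # P2" using Pd P1 by simp
      then have e1: "{last P1, u} \<in> pedges P" using pedges_append_sub2 pedges_append_sub1
        by (metis insertI1 pedges.simps(1) subsetD)
      have "P = P1 @ u # hd P2 # tl P2" using Pd P2 by simp
      then have e2: "{u, hd P2} \<in> pedges P" using pedges_append_sub2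
        by (metis insertI1 pedges.simps(1) subsetD)
      have "last P1 \<in> set P1" "hd P2 \<in> set P2" using P1 P2 by auto
      then have ne: "last P1 \<noteq> u" "last P1 \<noteq> hd P2" using dist Pd by auto
      then have "{last P1, u} \<noteq> {u, hd P2}" by (metis doubleton_eq_iff)
      moreover have "{last P1, u} \<in> {e\<in>?E. u \<in> e}" "{u, hd P2} \<in> {e\<in>?E. u \<in> e}"
        using e1 e2 abP unfolding subE_def by blast+
      moreover have "{e\<in>?E. u \<in> e} \<subseteq> ET" using subE_sub[of VT ET S] by blast
      then have "finite {e\<in>?E. u \<in> e}" using finite_subset fin by blast
      ultimately have "card {e\<in>?E. u \<in> e} \<ge> card {{last P1, u}, {u, hd P2}}"
        by (intro card_mono) auto
      moreover have "card {{last P1, u}, {u, hd P2}} = 2" using \<open>{last P1, u} \<noteq> {u, hd P2}\<close> by simp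
      ultimately have "card {e\<in>?E. u \<in> e} \<ge> 2" by linarith
      then show False using u unfolding leaves_def degree_def by simp
    qed
  qed
  show ?thesis using simp conn nc lv unfolding is_tree_def by blast
qed


definition NS :: "'a set \<Rightarrow> 'a set set \<Rightarrow> 'a \<Rightarrow> 'a \<Rightarrow> 'a \<Rightarrow> bool" where
  "NS VT ET v x y \<longleftrightarrow> (\<forall>P. path_between VT ET x y P \<longrightarrow> v \<notin> set P)"

lemma NS_sym: "NS VT ET v x y \<Longrightarrow> NS VT ET v y x"
  unfolding NS_def by (metis path_between_rev rev_rev_ident set_rev)

lemma NS_trans:
  assumes T: "is_tree VT ET" and xyz: "x \<in> VT" "y \<in> VT" "z \<in> VT"
    and n1: "NS VT ET v x y" and n2: "NS VT ET v y z"
  shows "NS VT ET v x z"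
proof -
  obtain P1 where P1: "path_between VT ET x y P1" using T xyz unfolding is_tree_def connected_graph_def by blast
  obtain P2 where P2: "path_between VT ET y z P2" using T xyz unfolding is_tree_def connected_graph_def by blast
  have "v \<notin> set P1" "v \<notin> set P2" using n1 n2 P1 P2 unfolding NS_def by auto
  have "path_between (set P1 \<union> set P2) ET x y P1" "path_between (set P1 \<union> set P2) ET y z P2"
    using P1 P2 unfolding path_between_alt by auto
  then have "reach ET (set P1 \<union> set P2) x z" using path_reach reach_trans by metis
  then obtain R where R: "path_between (set P1 \<union> set P2) ET x z R" using reach_path by metis
  have vR: "v \<notin> set R" using R \<open>v \<notin> set P1\<close> \<open>v \<notin> set P2\<close> unfolding path_between_alt by auto
  have R': "path_between VT ET x z R" using R P1 P2 unfolding path_between_alt by auto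
  show ?thesis unfolding NS_def
  proof (intro allI impI)
    fix P assume "path_between VT ET x z P"
    then have "P = R" using tree_unique[of VT ET] T R' unfolding is_tree_def by blast
    then show "v \<notin> set P" using vR by simp
  qed
qed

lemma in_internal: "P \<noteq> [] \<Longrightarrow> v \<in> set P \<Longrightarrow> v \<noteq> hd P \<Longrightarrow> v \<noteq> last P \<Longrightarrow> v \<in> internal P"
proof -
  assume h: "P \<noteq> []" "v \<in> set P" "v \<noteq> hd P" "v \<noteq> last P"
  obtain a L where P: "P = a # L" using h(1) by (cases P) auto
  have vL: "v \<in> set L" using h(2) h(3) P by auto
  then have L: "L \<noteq> []" by auto
  have vl: "v \<noteq> last L" using h(4) P L by simp
  have eq: "L = butlast L @ [last L]" using L by simp
  have "v \<in> set (butlast L @ [last L])" using vL eq by metis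
  then have "v \<in> set (butlast L)" using vl by auto
  then show ?thesis unfolding internal_def using P by simp
qed

lemma ci_pair:
  assumes CI: "completely_independent V E S' k T" and pq: "p < k" "q < k" "p \<noteq> q"
    and x: "x1 \<in> S'" "x2 \<in> S'"
    and P: "path_between (fst (T p)) (snd (T p)) x1 x2 P"
    and Q: "path_between (fst (T q)) (snd (T q)) x1 x2 Q"
  shows "internal P \<inter> internal Q = {}"
proof (cases "p < q")
  case True then show ?thesis using CI pq x P Q unfolding completely_independent_def by blast
next
  case False
  then have "q < p" using pq by simp
  then have "internal Q \<inter> internal P = {}" using CI pq x P Q unfolding completely_independent_def by blast
  then show ?thesis by blast
qed

lemma cross:
  assumes CI: "completely_independent V E S' k T" and pq: "p < k" "q < k" "p \<noteq> q"
    and S: "S \<subseteq> S'" and x: "x \<in> S" "y \<in> S" and v: "v \<notin> S"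
    and n: "\<not> NS (fst (T p)) (snd (T p)) v x y"
  shows "NS (fst (T q)) (snd (T q)) v x y"
proof -
  obtain P where P: "path_between (fst (T p)) (snd (T p)) x y P" "v \<in> set P" using n unfolding NS_def by blast
  have "P \<noteq> []" "hd P = x" "last P = y" using P unfolding path_between_alt by auto
  moreover have "v \<noteq> x" "v \<noteq> y" using v x by auto
  ultimately have vP: "v \<in> internal P" using in_internal[of P v] P(2) by simp
  show ?thesis unfolding NS_def
  proof (intro allI impI)
    fix Q assume Q: "path_between (fst (T q)) (snd (T q)) x y Q"
    have "internal P \<inter> internal Q = {}" using ci_pair[OF CI pq _ _ P(1) Q] x S by blast
    then have nv: "v \<notin> internal Q" using vP by blast
    show "v \<notin> set Q"
    proof
      assume vQ: "v \<in> set Q"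
      have "Q \<noteq> []" "hd Q = x" "last Q = y" using Q unfolding path_between_alt by auto
      moreover have "v \<noteq> x" "v \<noteq> y" using v x by auto
      ultimately have "v \<in> internal Q" using in_internal[of Q v] vQ by simp
      then show False using nv by blast
    qed
  qed
qed

lemma key:
  assumes CI: "completely_independent V E S' k T" and pq: "p < k" "q < k" "p \<noteq> q"
    and S: "S \<subseteq> S'" and v: "v \<notin> S"
    and vp: "v \<in> subV (fst (T p)) (snd (T p)) S" and vq: "v \<in> subV (fst (T q)) (snd (T q)) S"
  shows False
proof -
  let ?Np = "NS (fst (T p)) (snd (T p)) v" and ?Nq = "NS (fst (T q)) (snd (T q)) v"
  have stp: "steiner_tree V E S' (T p)" and stq: "steiner_tree V E S' (T q)"
    using CI pq unfolding completely_independent_def by auto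
  have Tp: "is_tree (fst (T p)) (snd (T p))" "S \<subseteq> fst (T p)" using stp S unfolding steiner_tree_def by auto
  have Tq: "is_tree (fst (T q)) (snd (T q))" "S \<subseteq> fst (T q)" using stq S unfolding steiner_tree_def by auto
  obtain a b where ab: "a \<in> S" "b \<in> S" "\<not> ?Np a b" using vp unfolding subV_def NS_def by blast
  obtain c d where cd: "c \<in> S" "d \<in> S" "\<not> ?Nq c d" using vq unfolding subV_def NS_def by blast
  have c1: "\<And>x y. x \<in> S \<Longrightarrow> y \<in> S \<Longrightarrow> \<not> ?Np x y \<Longrightarrow> ?Nq x y"
    using cross[OF CI pq S _ _ v] by blast
  have c2: "\<And>x y. x \<in> S \<Longrightarrow> y \<in> S \<Longrightarrow> \<not> ?Nq x y \<Longrightarrow> ?Np x y"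
    using cross[OF CI pq(2,1) _ S _ _ v] pq(3) by metis
  have tp: "?Np x z" if "x \<in> S" "y \<in> S" "z \<in> S" "?Np x y" "?Np y z" for x y z
    using NS_trans[OF Tp(1) subsetD[OF Tp(2) that(1)] subsetD[OF Tp(2) that(2)] subsetD[OF Tp(2) that(3)] that(4) that(5)] .
  have tq: "?Nq x z" if "x \<in> S" "y \<in> S" "z \<in> S" "?Nq x y" "?Nq y z" for x y z
    using NS_trans[OF Tq(1) subsetD[OF Tq(2) that(1)] subsetD[OF Tq(2) that(2)] subsetD[OF Tq(2) that(3)] that(4) that(5)] .
  have nqab: "?Nq a b" using c1 ab by blast
  have npcd: "?Np c d" using c2 cd by blast
  have sp: "?Np y x" if "?Np x y" for x y using NS_sym[OF that] .
  have sq: "?Nq y x" if "?Nq x y" for x y using NS_sym[OF that] .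
  have "\<not> ?Nq a c \<or> \<not> ?Nq a d"
  proof (rule ccontr)
    assume "\<not> (\<not> ?Nq a c \<or> \<not> ?Nq a d)"
    then have "?Nq c a" "?Nq a d" using sq by auto
    then have "?Nq c d" using tq[of c a d] ab cd by blast
    then show False using cd(3) by blast
  qed
  then have A: "?Np a c \<or> ?Np a d" using c2 ab cd by blast
  have "\<not> ?Nq b c \<or> \<not> ?Nq b d"
  proof (rule ccontr)
    assume "\<not> (\<not> ?Nq b c \<or> \<not> ?Nq b d)"
    then have "?Nq c b" "?Nq b d" using sq by auto
    then have "?Nq c d" using tq[of c b d] ab cd by blast
    then show False using cd(3) by blast
  qed
  then have B: "?Np b c \<or> ?Np b d" using c2 ab cd by blast
  have symc: "?Np d c" using sp[OF npcd] .
  show False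
    using A B
  proof (elim disjE)
    assume h: "?Np a c" "?Np b c"
    have "?Np a b" using tp[of a c b, OF ab(1) cd(1) ab(2) h(1) sp[OF h(2)]] .
    then show False using ab(3) by blast
  next
    assume h: "?Np a c" "?Np b d"
    have "?Np a d" using tp[of a c d, OF ab(1) cd(1) cd(2) h(1) npcd] .
    then have "?Np a b" using tp[of a d b, OF ab(1) cd(2) ab(2) _ sp[OF h(2)]] by blast
    then show False using ab(3) by blast
  next
    assume h: "?Np a d" "?Np b c"
    have "?Np a c" using tp[of a d c, OF ab(1) cd(2) cd(1) h(1) symc] .
    then have "?Np a b" using tp[of a c b, OF ab(1) cd(1) ab(2) _ sp[OF h(2)]] by blast
    then show False using ab(3) by blast
  next
    assume h: "?Np a d" "?Np b d"
    have "?Np a b" using tp[of a d b, OF ab(1) cd(2) ab(2) h(1) sp[OF h(2)]] .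
    then show False using ab(3) by blast
  qed
qed


lemma two_elems: "2 \<le> card X \<Longrightarrow> \<exists>x y. x \<in> X \<and> y \<in> X \<and> x \<noteq> y"
proof (rule ccontr)
  assume c: "2 \<le> card X" "\<not> (\<exists>x y. x \<in> X \<and> y \<in> X \<and> x \<noteq> y)"
  have "finite X" using c(1) card_ge_0_finite by force
  moreover have "\<forall>a1\<in>X. \<forall>a2\<in>X. a1 = a2" using c(2) by blast
  ultimately have "card X \<le> Suc 0" using card_le_Suc0_iff_eq by blast
  then show False using c(1) by simp
qed

lemma tree_has_edge:
  assumes "is_tree VT ET" "x \<in> VT" "y \<in> VT" "x \<noteq> y"
  shows "\<exists>e. e \<in> ET"
proof -
  obtain P where P: "path_between VT ET x y P" using assms unfolding is_tree_def connected_graph_def by blast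
  then have "length P \<ge> 2" using len2 assms(4) unfolding path_between_alt by metis
  then obtain a b r where "P = a # b # r" by (metis One_nat_def Suc_1 Suc_le_length_iff)
  then have "{a, b} \<in> pedges P" by simp
  then show ?thesis using P unfolding path_between_alt by blast
qed

lemma cist_bound:
  assumes fin: "finite E" and X: "2 \<le> card X" and h: "has_cist V E X k"
  shows "k \<le> card E"
proof -
  obtain T where CI: "completely_independent V E X k T" using h unfolding has_cist_def by blast
  obtain x y where xy: "x \<in> X" "y \<in> X" "x \<noteq> y" using two_elems X by blast
  have ex: "\<exists>e. e \<in> snd (T i)" if "i < k" for i
  proof -
    have "steiner_tree V E X (T i)" using CI that unfolding completely_independent_def by blast
    then have "is_tree (fst (T i)) (snd (T i))" "X \<subseteq> fst (T i)" unfolding steiner_tree_def by auto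
    then show ?thesis using tree_has_edge[of "fst (T i)" "snd (T i)" x y] xy by blast
  qed
  define f where "f i = (SOME e. e \<in> snd (T i))" for i
  have fin_i: "f i \<in> snd (T i)" if "i < k" for i using ex[OF that] unfolding f_def by (metis someI_ex)
  have fE: "f i \<in> E" if "i < k" for i
  proof -
    have "steiner_tree V E X (T i)" using CI that unfolding completely_independent_def by blast
    then show ?thesis using fin_i[OF that] unfolding steiner_tree_def subgraph_def by blast
  qed
  have inj: "inj_on f {..<k}"
  proof (rule inj_onI)
    fix i j assume ij: "i \<in> {..<k}" "j \<in> {..<k}" "f i = f j"
    show "i = j"
    proof (rule ccontr)
      assume "i \<noteq> j"
      then have "i < j \<or> j < i" by arith
      then have "snd (T i) \<inter> snd (T j) = {}" using CI ij unfolding completely_independent_def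
        by (metis inf_commute lessThan_iff)
      then show False using fin_i ij by (metis disjoint_iff lessThan_iff)
    qed
  qed
  have "f ` {..<k} \<subseteq> E" using fE by blast
  then have "card (f ` {..<k}) \<le> card E" using fin card_mono by metis
  then show ?thesis using inj card_image by (metis card_lessThan)
qed

theorem theorem2p2:
  fixes V :: "'a set" and E :: "'a set set" and S S' :: "'a set" and k :: nat
  assumes "finite_simple_graph V E"
    and "connected_graph V E"
    and "S' \<subseteq> V"
    and "2 \<le> card S"
    and "S \<subset> S'"
    and "has_cist V E S' k"
  shows "has_cist V E S k \<and> kappa_star V E S \<ge> kappa_star V E S'"
proof -
  have finV: "finite V" using assms(1) unfolding finite_simple_graph_def by blast
  have "E \<subseteq> Pow V"
  proof
    fix e assume "e \<in> E"
    then obtain u v where "e = {u, v}" "u \<in> V" "v \<in> V"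
      using assms(1) unfolding finite_simple_graph_def simple_graph_def by blast
    then show "e \<in> Pow V" by blast
  qed
  then have finE: "finite E" using finV by (meson finite_Pow_iff finite_subset)
  have SS: "S \<subseteq> S'" using assms(5) by blast
  have Sne: "S \<noteq> {}" using assms(4) by auto
  have finS': "finite S'" using assms(3) finV finite_subset by blast
  have "card S < card S'" using psubset_card_mono[OF finS' assms(5)] .
  then have cS': "2 \<le> card S'" using assms(4) by linarith
  have main: "has_cist V E S j" if hj: "has_cist V E S' j" for j
  proof -
    obtain T where CI: "completely_independent V E S' j T" using hj unfolding has_cist_def by blast
    have h: "\<forall>p q. p < q \<and> q < j \<longrightarrow> snd (T p) \<inter> snd (T q) = {} \<and>
        fst (T p) \<inter> fst (T q) = S' \<and>
        (\<forall>x1\<in>S'. \<forall>x2\<in>S'. \<forall>P Q.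
            path_between (fst (T p)) (snd (T p)) x1 x2 P \<and>
            path_between (fst (T q)) (snd (T q)) x1 x2 Q \<longrightarrow>
            internal P \<inter> internal Q = {})"
      using CI unfolding completely_independent_def by (rule conjunct2)
    have CI2: "snd (T p) \<inter> snd (T q) = {} \<and>
        fst (T p) \<inter> fst (T q) = S' \<and>
        (\<forall>x1\<in>S'. \<forall>x2\<in>S'. \<forall>P Q.
            path_between (fst (T p)) (snd (T p)) x1 x2 P \<and>
            path_between (fst (T q)) (snd (T q)) x1 x2 Q \<longrightarrow>
            internal P \<inter> internal Q = {})" if "p < q" "q < j" for p q
      using mp[OF spec[OF spec[OF h, of p], of q] conjI[OF that]] .
    define T' where "T' i = (subV (fst (T i)) (snd (T i)) S, subE (fst (T i)) (snd (T i)) S)" for i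
    have st: "steiner_tree V E S (T' i)" if i: "i < j" for i
    proof -
      have s: "steiner_tree V E S' (T i)" using CI i unfolding completely_independent_def by blast
      then have t: "is_tree (fst (T i)) (snd (T i))" "S' \<subseteq> fst (T i)" "fst (T i) \<subseteq> V" "snd (T i) \<subseteq> E"
        unfolding steiner_tree_def subgraph_def by auto
      have "finite (snd (T i))" using t finE finite_subset by blast
      moreover have SV: "S \<subseteq> fst (T i)" using t(2) SS by blast
      ultimately have "is_tree (subV (fst (T i)) (snd (T i)) S) (subE (fst (T i)) (snd (T i)) S)
          \<and> leaves (subV (fst (T i)) (snd (T i)) S) (subE (fst (T i)) (snd (T i)) S) \<subseteq> S"
        using sub_tree[OF t(1) SV Sne] by blast
      then have "is_tree (fst (T' i)) (snd (T' i)) \<and> leaves (fst (T' i)) (snd (T' i)) \<subseteq> S"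
        unfolding T'_def by simp
      moreover have "subgraph (fst (T' i)) (snd (T' i)) V E"
      proof -
        have "subV (fst (T i)) (snd (T i)) S \<subseteq> V" using subV_sub[of "fst (T i)" "snd (T i)" S] t(3) by blast
        moreover have "subE (fst (T i)) (snd (T i)) S \<subseteq> E" using subE_sub[of "fst (T i)" "snd (T i)" S] t(4) by blast
        moreover have "\<forall>e\<in>subE (fst (T i)) (snd (T i)) S. e \<subseteq> subV (fst (T i)) (snd (T i)) S"
          using subE_in by blast
        ultimately show ?thesis unfolding subgraph_def T'_def by simp
      qed
      moreover have "S \<subseteq> fst (T' i)" unfolding T'_def using S_subV[OF SV] by simp
      ultimately show ?thesis unfolding steiner_tree_def by blast
    qed
    have "completely_independent V E S j T'"
      unfolding completely_independent_def
    proof (intro conjI allI impI)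
      fix i assume "i < j"
      then show "steiner_tree V E S (T' i)" using st by blast
    next
      fix p q assume pq: "p < q \<and> q < j"
      have "snd (T p) \<inter> snd (T q) = {}" using CI2[of p q] pq by blast
      moreover have "snd (T' p) \<subseteq> snd (T p)" "snd (T' q) \<subseteq> snd (T q)" unfolding T'_def
        using subE_sub by auto
      ultimately show "snd (T' p) \<inter> snd (T' q) = {}" by blast
    next
      fix p q assume pq: "p < q \<and> q < j"
      show "fst (T' p) \<inter> fst (T' q) = S"
      proof
        show "fst (T' p) \<inter> fst (T' q) \<subseteq> S"
        proof
          fix v assume v: "v \<in> fst (T' p) \<inter> fst (T' q)"
          show "v \<in> S"
          proof (rule ccontr)
            assume nv: "v \<notin> S"
            have vp: "v \<in> subV (fst (T p)) (snd (T p)) S" "v \<in> subV (fst (T q)) (snd (T q)) S"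
              using v unfolding T'_def by auto
            have "p < j" "q < j" "p \<noteq> q" using pq by auto
            then show False using key[OF CI _ _ _ SS nv vp] by blast
          qed
        qed
      next
        have "p < j" "q < j" using pq by auto
        then have "steiner_tree V E S (T' p)" "steiner_tree V E S (T' q)" using st by blast+
        then show "S \<subseteq> fst (T' p) \<inter> fst (T' q)" unfolding steiner_tree_def by blast
      qed
    next
      fix p q assume pq: "p < q \<and> q < j"
      show "\<forall>x1\<in>S. \<forall>x2\<in>S. \<forall>P Q.
            path_between (fst (T' p)) (snd (T' p)) x1 x2 P \<and>
            path_between (fst (T' q)) (snd (T' q)) x1 x2 Q \<longrightarrow>
            internal P \<inter> internal Q = {}"
      proof (intro ballI allI impI)
        fix x1 x2 P Q assume x: "x1 \<in> S" "x2 \<in> S" and PQ: "path_between (fst (T' p)) (snd (T' p)) x1 x2 P \<and>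
            path_between (fst (T' q)) (snd (T' q)) x1 x2 Q"
        have ap: "path_between (subV (fst (T p)) (snd (T p)) S) (subE (fst (T p)) (snd (T p)) S) x1 x2 P"
          using PQ unfolding T'_def by simp
        have bp: "path_between (fst (T p)) (snd (T p)) x1 x2 P"
          by (rule path_mono[OF ap subV_sub subE_sub])
        have aq: "path_between (subV (fst (T q)) (snd (T q)) S) (subE (fst (T q)) (snd (T q)) S) x1 x2 Q"
          using PQ unfolding T'_def by simp
        have bq: "path_between (fst (T q)) (snd (T q)) x1 x2 Q"
          by (rule path_mono[OF aq subV_sub subE_sub])
        show "internal P \<inter> internal Q = {}"
          using CI2[of p q] pq x SS bp bq by blast
      qed
    qed
    then show ?thesis unfolding has_cist_def by blast
  qed
  have r1: "has_cist V E S k" using main assms(6) by blast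
  have "{j. has_cist V E S' j} \<subseteq> {..card E}" using cist_bound[OF finE cS'] by auto
  then have f1: "finite {j. has_cist V E S' j}" using finite_subset by blast
  have "{j. has_cist V E S j} \<subseteq> {..card E}" using cist_bound[OF finE assms(4)] by auto
  then have f2: "finite {j. has_cist V E S j}" using finite_subset by blast
  have ne: "{j. has_cist V E S' j} \<noteq> {}" using assms(6) by blast
  have "kappa_star V E S' \<in> {j. has_cist V E S' j}"
    unfolding kappa_star_def using Max_in[OF f1 ne] .
  then have "has_cist V E S (kappa_star V E S')" using main by blast
  then have "kappa_star V E S' \<in> {j. has_cist V E S j}" by simp
  then have "kappa_star V E S' \<le> kappa_star V E S" unfolding kappa_star_def[of V E S]
    using Max_ge[OF f2] by blast
  then show ?thesis using r1 by blast
qed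

end
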